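(* Let $\alpha,\beta$ be parameters, $q$ an indeterminate, and $E_n(x;q)=\sum_{k=0}^nE_{n,k}(\alpha,\beta,q)x^k$ with $E_{n,k}$ as in the context. For $n\geq 1$, \[ E_{n}(1;q)=\prod_{i=0}^{n-1}[\alpha+\beta+i]. \]
   Context: For real $x$, $[x]=\frac{1-q^x}{1-q}$. The numbers $E_{n,k}(\alpha,\beta,q)$ are determined by $E_{0,0}=1$, $E_{n,k}=0$ if $k\notin\{0,\dots,n\}$, and for $n\ge1$: $E_{n,k}(\alpha,\beta,q)=q^{\beta+k-1}[n-k+\alpha]E_{n-1,k-1}(\alpha,\beta,q)+[k+\beta]E_{n-1,k}(\alpha,\beta,q)$. *)

theory Defs
  imports Complex_Main
begin

text \<open>q-number [x] = (1 - q^x)/(1 - q), real exponent via powr (q > 0).\<close>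
definition qnum :: "real \<Rightarrow> real \<Rightarrow> real" where
  "qnum q x = (1 - q powr x) / (1 - q)"

text \<open>E a b q n k = E_{n,k}(alpha,beta,q); zero for k > n (k is a nat, so k >= 0).\<close>
fun E :: "real \<Rightarrow> real \<Rightarrow> real \<Rightarrow> nat \<Rightarrow> nat \<Rightarrow> real" where
  "E a b q 0 k = (if k = 0 then 1 else 0)"
| "E a b q (Suc n) k =
     (if k > Suc n then 0 else
        (if k = 0 then 0
         else q powr (b + real k - 1) * qnum q (real (Suc n) - real k + a) * E a b q n (k - 1))
        + qnum q (real k + b) * E a b q n k)"

definition En :: "real \<Rightarrow> real \<Rightarrow> real \<Rightarrow> nat \<Rightarrow> real \<Rightarrow> real" where
  "En a b q n x = (\<Sum>k = 0..n. E a b q n k * x ^ k)"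

end

theory Submission
  imports Defs
begin

lemma E_zero: "k > n \<Longrightarrow> E a b q n k = 0"
  by (induction n arbitrary: k) auto

lemma key: "q \<noteq> 1 \<Longrightarrow>
  q powr (b + real j) * qnum q (real n - real j + a) + qnum q (real j + b) = qnum q (a + b + real n)"
proof -
  assume q: "q \<noteq> 1"
  have "q powr (b + real j) * q powr (real n - real j + a) = q powr (a + b + real n)"
    by (simp add: powr_add[symmetric] algebra_simps)
  moreover have "1 - q \<noteq> 0" using q by simp
  ultimately show ?thesis unfolding qnum_def
    by (simp add: field_simps)
qed

lemma step:
  assumes "q \<noteq> 1"
  shows "(\<Sum>k = 0..Suc n. E a b q (Suc n) k) = qnum q (a + b + real n) * (\<Sum>k = 0..n. E a b q n k)"
proof -
  let ?T = "\<lambda>k. q powr (b + real k - 1) * qnum q (real (Suc n) - real k + a) * E a b q n (k - 1)"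
  have "(\<Sum>k = 0..Suc n. E a b q (Suc n) k)
      = (\<Sum>k = 0..Suc n. (if k = 0 then 0 else ?T k)) + (\<Sum>k = 0..Suc n. qnum q (real k + b) * E a b q n k)"
    by (simp add: sum.distrib)
  also have "(\<Sum>k = 0..Suc n. (if k = 0 then 0 else ?T k)) = (\<Sum>j = 0..n. ?T (Suc j))"
    by (subst sum.atLeast0_atMost_Suc_shift) simp
  also have "(\<Sum>k = 0..Suc n. qnum q (real k + b) * E a b q n k) = (\<Sum>k = 0..n. qnum q (real k + b) * E a b q n k)"
    by (simp add: E_zero)
  also have "(\<Sum>j = 0..n. ?T (Suc j)) + (\<Sum>k = 0..n. qnum q (real k + b) * E a b q n k)
      = (\<Sum>j = 0..n. (q powr (b + real j) * qnum q (real n - real j + a) + qnum q (real j + b)) * E a b q n j)"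
    by (simp add: sum.distrib[symmetric] algebra_simps)
  also have "\<dots> = (\<Sum>j = 0..n. qnum q (a + b + real n) * E a b q n j)"
    using key[OF assms] by simp
  finally show ?thesis by (simp add: sum_distrib_left)
qed

lemma main: "q \<noteq> 1 \<Longrightarrow> (\<Sum>k = 0..n. E a b q n k) = (\<Prod>i<n. qnum q (a + b + real i))"
proof (induction n)
  case 0 then show ?case by simp
next
  case (Suc n)
  have "(\<Sum>k = 0..Suc n. E a b q (Suc n) k) = qnum q (a + b + real n) * (\<Sum>k = 0..n. E a b q n k)"
    by (rule step[OF Suc.prems])
  then show ?case using Suc by (simp add: mult.commute)
qed

theorem corollary3p3:
  fixes a b q :: real and n :: nat
  assumes "0 < q" and "q \<noteq> 1" and "n \<ge> 1"
  shows "En a b q n 1 = (\<Prod>i = 0..n-1. qnum q (a + b + real i))"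
proof -
  have "{0..n-1} = {..<n}" using assms(3) by auto
  then show ?thesis using main[OF assms(2)] by (simp add: En_def)
qed

end
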